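(* Let $\lambda>0$, $2<q<3$, let $\kappa$ be a constant with $2^{2-q}\le\kappa\le q2^{1-q}$, and let $h:\mathbb{R}\to[0,+\infty]$ be convex and $C^1$ on $(0,\infty)$ with $\lim_{t\to0^+}h(t)=+\infty$, $\liminf_{t\to\infty}h(t)/t>0$, $h(t)=+\infty$ for $t\le0$, and suppose $h'(\lambda^3)\ge0$. Define $\mathcal{F}_2(A)=(\kappa/2)|A-\lambda\mathbf{1}|^q+\lambda h'(\lambda^3)G(A)$. Then $\mathcal{F}_2(A)\ge0$ for all $A\in\mathbb{R}^{3\times3}$ provided $$\lambda h'(\lambda^3)\le\inf_{c_0>0}\left\{\frac{\kappa}{2}\max\left\{\frac{c_0^{q-2}}{M_2(\lambda,c_0)},\frac{c_0^{q-3}}{M_3(\lambda,c_0)}\right\}\right\}.$$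
   Context: For $A\in\mathbb{R}^{3\times3}$ let $\lambda_1(A),\lambda_2(A),\lambda_3(A)$ be its singular values, $P(A)=\sum_{1\le i<j\le3}\lambda_i(A)\lambda_j(A)-\lambda\sum_i\lambda_i(A)$, $N(A)=\operatorname{tr}\operatorname{cof}A-\lambda\operatorname{tr}A$ (cof the cofactor matrix), and $G(A)=P(A)-N(A)$. $|\cdot|$ is the Frobenius norm and $\mathbf{1}$ the identity. For $c_0>0$: $M_2(\lambda,c_0)=\sup\{|G(A)|/|A-\lambda\mathbf{1}|^2:\ |A-\lambda\mathbf{1}|\ge c_0\}$ and $M_3(\lambda,c_0)=\sup\{|G(A)|/|A-\lambda\mathbf{1}|^3:\ 0<|A-\lambda\mathbf{1}|<c_0\}$. *)

theory Defs
  imports "HOL-Analysis.Analysis"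
begin

text \<open>Cofactor matrix: entry (i,j) is the (i,j)-cofactor, i.e. the determinant of A with
  row i and column j cleared and a 1 put at position (i,j); this equals (-1)^(i+j) times the
  (i,j)-minor.\<close>
definition cof :: "real^'n^'n \<Rightarrow> real^'n^'n" where
  "cof A = (\<chi> i j. det (\<chi> k l. if k = i \<and> l = j then 1
                              else if k = i \<or> l = j then 0 else A$k$l))"

definition diag3 :: "real^3 \<Rightarrow> real^3^3" where
  "diag3 s = (\<chi> i j. if i = j then s$i else 0)"

definition is_sv :: "real^3^3 \<Rightarrow> real^3 \<Rightarrow> bool" where
  "is_sv A s \<longleftrightarrow> (\<forall>i. s$i \<ge> 0) \<and>
     (\<exists>U V. orthogonal_matrix U \<and> orthogonal_matrix V \<and> A = U ** diag3 s ** transpose V)"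

definition sv :: "real^3^3 \<Rightarrow> real^3" where
  "sv A = (SOME s. is_sv A s)"

definition Pfun :: "real \<Rightarrow> real^3^3 \<Rightarrow> real" where
  "Pfun lam A = (let s = sv A in
     s$1 * s$2 + s$1 * s$3 + s$2 * s$3 - lam * (s$1 + s$2 + s$3))"

definition Nfun :: "real \<Rightarrow> real^3^3 \<Rightarrow> real" where
  "Nfun lam A = trace (cof A) - lam * trace A"

definition Gfun :: "real \<Rightarrow> real^3^3 \<Rightarrow> real" where
  "Gfun lam A = Pfun lam A - Nfun lam A"

text \<open>Frobenius norm of A - lam*1 (the norm on real^3^3 is the Frobenius norm).\<close>
definition dist1 :: "real \<Rightarrow> real^3^3 \<Rightarrow> real" where
  "dist1 lam A = norm (A - mat lam)"

definition M2 :: "real \<Rightarrow> real \<Rightarrow> ereal" where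
  "M2 lam c0 = (SUP A \<in> {A. dist1 lam A \<ge> c0}. ereal (\<bar>Gfun lam A\<bar> / (dist1 lam A)^2))"

definition M3 :: "real \<Rightarrow> real \<Rightarrow> ereal" where
  "M3 lam c0 = (SUP A \<in> {A. 0 < dist1 lam A \<and> dist1 lam A < c0}.
                   ereal (\<bar>Gfun lam A\<bar> / (dist1 lam A)^3))"

definition convex_ext :: "(real \<Rightarrow> ereal) \<Rightarrow> bool" where
  "convex_ext h \<longleftrightarrow> (\<forall>x y u. 0 \<le> u \<and> u \<le> 1 \<longrightarrow>
      h ((1 - u) * x + u * y) \<le> ereal (1 - u) * h x + ereal u * h y)"

definition F2 :: "real \<Rightarrow> real \<Rightarrow> real \<Rightarrow> real \<Rightarrow> real^3^3 \<Rightarrow> real" where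
  "F2 kappa q lam dh A = kappa / 2 * (dist1 lam A) powr q + lam * dh * Gfun lam A"

end

theory Submission
  imports Defs
begin

lemma dot_transp: "(y::real^3) \<bullet> (A *v x) = (transpose A *v y) \<bullet> x"
  by (simp add: dot_lmul_matrix)

lemma sv_stage:
  fixes A :: "real^3^3" and x0 y0 p q :: "real^3"
  assumes nx: "norm x0 = 1" and ny: "norm y0 = 1"
   and vq: "(A *v x0) \<bullet> q = 0" and wp: "(transpose A *v y0) \<bullet> p = 0"
   and x0p: "x0 \<bullet> p = 0" and y0q: "y0 \<bullet> q = 0"
   and mx: "\<forall>x y. norm x = 1 \<and> norm y = 1 \<and> x \<bullet> p = 0 \<and> y \<bullet> q = 0 \<longrightarrow> y \<bullet> (A *v x) \<le> y0 \<bullet> (A *v x0)"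
  shows "A *v x0 = (y0 \<bullet> (A *v x0)) *\<^sub>R y0" "transpose A *v y0 = (y0 \<bullet> (A *v x0)) *\<^sub>R x0"
    "y0 \<bullet> (A *v x0) \<ge> 0"
proof -
  define s where "s = y0 \<bullet> (A *v x0)"
  define v where "v = A *v x0"
  define w where "w = transpose A *v y0"
  have sw: "s = w \<bullet> x0" unfolding s_def w_def by (rule dot_transp)
  show "A *v x0 = s *\<^sub>R y0"
  proof (cases "v = 0")
    case True then show ?thesis unfolding s_def v_def[symmetric] by simp
  next
    case False
    define y where "y = (1 / norm v) *\<^sub>R v"
    have "norm y = 1" using False by (simp add: y_def)
    moreover have "y \<bullet> q = 0" using vq by (simp add: y_def v_def)
    ultimately have "y \<bullet> v \<le> s" using mx nx x0p unfolding s_def v_def by blast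
    moreover have "y \<bullet> v = norm v" using False by (simp add: y_def power2_norm_eq_inner[symmetric] power2_eq_square)
    moreover have "s \<le> norm v" unfolding s_def v_def[symmetric]
      using norm_cauchy_schwarz[of y0 v] ny by simp
    ultimately have "s = norm v" by simp
    hence "y0 \<bullet> v = norm y0 * norm v" using ny by (simp add: s_def v_def)
    hence "norm y0 *\<^sub>R v = norm v *\<^sub>R y0" by (simp add: norm_cauchy_schwarz_eq)
    then show ?thesis using ny \<open>s = norm v\<close> by (simp add: v_def)
  qed
  show "transpose A *v y0 = s *\<^sub>R x0"
  proof (cases "w = 0")
    case True then show ?thesis using sw w_def by simp
  next
    case False
    define x where "x = (1 / norm w) *\<^sub>R w"
    have "norm x = 1" using False by (simp add: x_def)
    moreover have "x \<bullet> p = 0" using wp by (simp add: x_def w_def)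
    ultimately have "y0 \<bullet> (A *v x) \<le> s" using mx ny y0q unfolding s_def by blast
    moreover have "y0 \<bullet> (A *v x) = w \<bullet> x" using dot_transp w_def by simp
    moreover have "w \<bullet> x = norm w" using False by (simp add: x_def power2_norm_eq_inner[symmetric] power2_eq_square)
    moreover have "s \<le> norm w" unfolding sw
      using norm_cauchy_schwarz[of w x0] nx by simp
    ultimately have "s = norm w" by simp
    hence "x0 \<bullet> w = norm x0 * norm w" using nx sw by (simp add: inner_commute)
    hence "norm x0 *\<^sub>R w = norm w *\<^sub>R x0" by (simp add: norm_cauchy_schwarz_eq)
    then show ?thesis using nx \<open>s = norm w\<close> by (simp add: w_def)
  qed
  have "(- y0) \<bullet> (A *v x0) \<le> s" using mx[rule_format, of x0 "-y0"] nx ny x0p y0q unfolding s_def by simp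
  then show "s \<ge> 0" unfolding s_def by simp
qed

lemma cross_decomp: fixes y1 y2 v :: "real^3"
  assumes "norm y1 = 1" "norm y2 = 1" "y1 \<bullet> y2 = 0" "v \<bullet> y1 = 0" "v \<bullet> y2 = 0"
  shows "v = ((cross3 y1 y2) \<bullet> v) *\<^sub>R (cross3 y1 y2)"
proof -
  have l1: "\<And>a b c::real^3. cross3 (cross3 a b) c = (a \<bullet> c) *\<^sub>R b - (b \<bullet> c) *\<^sub>R a"
    by (simp add: cross3_simps forall_3)
  have l2: "\<And>a b c::real^3. cross3 a (cross3 b c) = (a \<bullet> c) *\<^sub>R b - (a \<bullet> b) *\<^sub>R c"
    by (simp add: cross3_simps forall_3)
  have n3: "norm (cross3 y1 y2) = 1" using norm_cross_dot[of y1 y2] assms norm_ge_zero[of "cross3 y1 y2"] by (auto simp add: power2_eq_1_iff)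
  have "cross3 (cross3 y1 y2) v = 0" using l1 assms by (simp add: inner_commute)
  hence "cross3 (cross3 y1 y2) (cross3 (cross3 y1 y2) v) = 0" by simp
  hence "((cross3 y1 y2) \<bullet> v) *\<^sub>R (cross3 y1 y2) - ((cross3 y1 y2) \<bullet> (cross3 y1 y2)) *\<^sub>R v = 0" using l2 by simp
  moreover have "(cross3 y1 y2) \<bullet> (cross3 y1 y2) = 1" using n3 by (simp add: norm_eq_1)
  ultimately show ?thesis by simp
qed
lemma norm_sq1: "(norm (v::real^3))\<^sup>2 = 1 \<Longrightarrow> norm v = 1"
  by (smt (verit) norm_ge_zero power2_eq_1_iff)

lemma cont_f: "continuous_on S (\<lambda>z::(real^3)\<times>(real^3). snd z \<bullet> (A *v fst z))"
  by (intro continuous_intros matrix_vector_mul_bounded_linear[THEN bounded_linear.continuous_on])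

lemma exists_orth:
  fixes a :: "real^3" assumes "norm a = 1"
  shows "\<exists>b. norm b = 1 \<and> b \<bullet> a = 0"
proof -
  obtain Q :: "real^3^3" where Q: "orthogonal_matrix Q" "Q *v axis 1 1 = a"
    using orthogonal_matrix_exists_basis[OF assms] by blast
  have ot: "orthogonal_transformation ((*v) Q)"
    unfolding orthogonal_transformation_matrix using Q(1) by (simp add: matrix_vector_mul_linear)
  define b where "b = Q *v axis 2 1"
  have "norm b = norm (axis 2 1 :: real^3)" unfolding b_def
    using ot orthogonal_transformation_norm by blast
  moreover have "b \<bullet> a = axis 2 1 \<bullet> (axis 1 1 :: real^3)" unfolding b_def Q(2)[symmetric]
    using ot orthogonal_transformation_def by blast
  ultimately show ?thesis by (auto simp: inner_axis_axis)
qed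

lemma svd_exists:
  fixes A :: "real^3^3"
  shows "\<exists>s. is_sv A s"
proof -
  define f where "f = (\<lambda>z::(real^3)\<times>(real^3). snd z \<bullet> (A *v fst z))"
  define K1 where "K1 = sphere (0::real^3) 1 \<times> sphere (0::real^3) 1"
  have cK1: "compact K1" unfolding K1_def by (intro compact_Times compact_sphere)
  have neK1: "K1 \<noteq> {}" unfolding K1_def by simp
  obtain z1 where z1: "z1 \<in> K1" "\<forall>z\<in>K1. f z \<le> f z1"
    using continuous_attains_sup[OF cK1 neK1 cont_f[of K1 A, folded f_def]] by blast
  define x1 where "x1 = fst z1"
  define y1 where "y1 = snd z1"
  have nx1: "norm x1 = 1" and ny1: "norm y1 = 1" using z1(1) by (auto simp: K1_def x1_def y1_def)
  have mx1: "\<forall>x y. norm x = 1 \<and> norm y = 1 \<and> x \<bullet> 0 = 0 \<and> y \<bullet> 0 = 0 \<longrightarrow> y \<bullet> (A *v x) \<le> y1 \<bullet> (A *v x1)"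
    using z1(2) by (auto simp: K1_def f_def x1_def y1_def)
  define s1 where "s1 = y1 \<bullet> (A *v x1)"
  note st1 = sv_stage[OF nx1 ny1 _ _ _ _ mx1, simplified, folded s1_def]
  have Ax1: "A *v x1 = s1 *\<^sub>R y1" and Aty1: "y1 v* A = s1 *\<^sub>R x1" and s1: "s1 \<ge> 0"
    using st1 by auto
  define K2 where "K2 = K1 \<inter> {z. fst z \<bullet> x1 = 0 \<and> snd z \<bullet> y1 = 0}"
  have "closed {z::(real^3)\<times>(real^3). fst z \<bullet> x1 = 0 \<and> snd z \<bullet> y1 = 0}"
    by (intro closed_Collect_conj closed_Collect_eq continuous_intros)
  hence cK2: "compact K2" unfolding K2_def using cK1 by (simp add: compact_Int_closed)
  obtain b where b: "norm b = 1" "b \<bullet> x1 = 0" using exists_orth[OF nx1] by blast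
  obtain c where c: "norm c = 1" "c \<bullet> y1 = 0" using exists_orth[OF ny1] by blast
  have "(b,c) \<in> K2" unfolding K2_def K1_def using b c by simp
  hence neK2: "K2 \<noteq> {}" by blast
  obtain z2 where z2: "z2 \<in> K2" "\<forall>z\<in>K2. f z \<le> f z2"
    using continuous_attains_sup[OF cK2 neK2 cont_f[of K2 A, folded f_def]] by blast
  define x2 where "x2 = fst z2"
  define y2 where "y2 = snd z2"
  have nx2: "norm x2 = 1" and ny2: "norm y2 = 1" and x21: "x2 \<bullet> x1 = 0" and y21: "y2 \<bullet> y1 = 0"
    using z2(1) by (auto simp: K2_def K1_def x2_def y2_def)
  have mx2: "\<forall>x y. norm x = 1 \<and> norm y = 1 \<and> x \<bullet> x1 = 0 \<and> y \<bullet> y1 = 0 \<longrightarrow> y \<bullet> (A *v x) \<le> y2 \<bullet> (A *v x2)"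
  proof (intro allI impI)
    fix x y assume h: "norm x = 1 \<and> norm y = 1 \<and> x \<bullet> x1 = 0 \<and> y \<bullet> y1 = 0"
    hence "(x,y) \<in> K2" by (simp add: K2_def K1_def)
    with z2(2) show "y \<bullet> (A *v x) \<le> y2 \<bullet> (A *v x2)" by (auto simp: f_def x2_def y2_def)
  qed
  have c1: "(A *v x2) \<bullet> y1 = 0"
    by (metis Aty1 dot_lmul_matrix inner_commute inner_scaleR_left mult_zero_right x21)
  have c2: "(transpose A *v y2) \<bullet> x1 = 0"
    by (metis Ax1 dot_lmul_matrix inner_commute inner_scaleR_right mult_zero_right y21 transpose_matrix_vector)
  define s2 where "s2 = y2 \<bullet> (A *v x2)"
  note st2 = sv_stage[OF nx2 ny2 c1 c2 x21 y21 mx2, folded s2_def]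
  have Ax2: "A *v x2 = s2 *\<^sub>R y2" and Aty2: "y2 v* A = s2 *\<^sub>R x2" and s2: "s2 \<ge> 0"
    using st2 by auto
  define x3 where "x3 = cross3 x1 x2"
  define y3 where "y3 = cross3 y1 y2"
  have nx3: "norm x3 = 1" unfolding x3_def using norm_cross_dot[of x1 x2] nx1 nx2 x21
    by (intro norm_sq1) (simp add: inner_commute)
  have ny3: "norm y3 = 1" unfolding y3_def using norm_cross_dot[of y1 y2] ny1 ny2 y21
    by (intro norm_sq1) (simp add: inner_commute)
  have x31: "x3 \<bullet> x1 = 0" and x32: "x3 \<bullet> x2 = 0" unfolding x3_def
    by (simp_all add: dot_cross_self inner_commute)
  have y31: "y3 \<bullet> y1 = 0" and y32: "y3 \<bullet> y2 = 0" unfolding y3_def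
    by (simp_all add: dot_cross_self inner_commute)
  define v where "v = A *v x3"
  have v1: "v \<bullet> y1 = 0" unfolding v_def
    by (metis Aty1 dot_lmul_matrix inner_commute inner_scaleR_left mult_zero_right x31)
  have v2: "v \<bullet> y2 = 0" unfolding v_def
    by (metis Aty2 dot_lmul_matrix inner_commute inner_scaleR_left mult_zero_right x32)
  have vdec: "v = (y3 \<bullet> v) *\<^sub>R y3" unfolding y3_def
    by (rule cross_decomp[OF ny1 ny2 _ v1 v2]) (metis inner_commute y21)
  define cc where "cc = y3 \<bullet> v"
  define y3' where "y3' = (if cc \<ge> 0 then y3 else - y3)"
  define s3 where "s3 = \<bar>cc\<bar>"
  have Ax3: "A *v x3 = s3 *\<^sub>R y3'"
    using vdec unfolding v_def[symmetric] cc_def[symmetric] s3_def y3'_def by auto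
  have ny3': "norm y3' = 1" using ny3 by (simp add: y3'_def)
  have y3'1: "y3' \<bullet> y1 = 0" and y3'2: "y3' \<bullet> y2 = 0" using y31 y32 by (auto simp: y3'_def)
  define xs where "xs = (\<lambda>j::3. if j = 1 then x1 else if j = 2 then x2 else x3)"
  define ys where "ys = (\<lambda>j::3. if j = 1 then y1 else if j = 2 then y2 else y3')"
  define s where "s = (vector [s1, s2, s3] :: real^3)"
  define U where "U = ((\<chi> i j. ys j $ i) :: real^3^3)"
  define V where "V = ((\<chi> i j. xs j $ i) :: real^3^3)"
  have colU: "column j U = ys j" for j unfolding U_def column_def by (simp add: vec_eq_iff)
  have colV: "column j V = xs j" for j unfolding V_def column_def by (simp add: vec_eq_iff)
  have nxs: "norm (xs j) = 1" for j using exhaust_3[of j] nx1 nx2 nx3 by (auto simp: xs_def)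
  have nys: "norm (ys j) = 1" for j using exhaust_3[of j] ny1 ny2 ny3' by (auto simp: ys_def)
  have oxs: "i \<noteq> j \<Longrightarrow> orthogonal (xs i) (xs j)" for i j
    using exhaust_3[of i] exhaust_3[of j] x21 x31 x32
    by (auto simp: xs_def orthogonal_def inner_commute)
  have oys: "i \<noteq> j \<Longrightarrow> orthogonal (ys i) (ys j)" for i j
    using exhaust_3[of i] exhaust_3[of j] y21 y3'1 y3'2
    by (auto simp: ys_def orthogonal_def inner_commute)
  have oU: "orthogonal_matrix U" unfolding orthogonal_matrix_orthonormal_columns colU
    using nys oys by blast
  have oV: "orthogonal_matrix V" unfolding orthogonal_matrix_orthonormal_columns colV
    using nxs oxs by blast
  have sj: "s $ j \<ge> 0" for j using exhaust_3[of j] s1 s2 by (auto simp: s_def s3_def)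
  have Axs: "A *v xs j = (s $ j) *\<^sub>R ys j" for j
    using exhaust_3[of j] Ax1 Ax2 Ax3 by (auto simp: xs_def ys_def s_def)
  have AV: "A ** V = U ** diag3 s"
  proof -
    have "(A ** V) $ i $ j = (U ** diag3 s) $ i $ j" for i j
    proof -
      have "(A ** V) $ i $ j = (A *v xs j) $ i"
        by (simp add: matrix_matrix_mult_def matrix_vector_mult_def V_def)
      also have "\<dots> = s $ j * ys j $ i" using Axs by simp
      also have "\<dots> = (U ** diag3 s) $ i $ j"
        by (simp add: matrix_matrix_mult_def U_def diag3_def if_distrib cong: if_cong)
      finally show ?thesis .
    qed
    then show ?thesis by (simp add: vec_eq_iff)
  qed
  have "A = A ** (V ** transpose V)" using oV by (simp add: orthogonal_matrix_def)
  also have "\<dots> = U ** diag3 s ** transpose V" by (simp add: matrix_mul_assoc AV)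
  finally have "A = U ** diag3 s ** transpose V" .
  then have "is_sv A s" unfolding is_sv_def using oU oV sj by blast
  then show ?thesis by blast
qed

lemma sv_is: "is_sv A (sv A)"
  unfolding sv_def by (rule someI_ex, rule svd_exists)

lemma orth_entry: assumes "orthogonal_matrix (W::real^3^3)" shows "\<bar>W$i$j\<bar> \<le> 1"
proof -
  have "norm (row i W) = 1" using assms orthogonal_matrix_orthonormal_rows by blast
  moreover have "row i W = W $ i" by (simp add: row_def vec_eq_iff)
  ultimately show ?thesis using component_le_norm_cart[of "W$i" j] by simp
qed

lemma trace_diag: "trace (W ** diag3 s) = W$1$1 * s$1 + W$2$2 * s$2 + W$3$3 * s$3"
  by (simp add: trace_def matrix_matrix_mult_def diag3_def if_distrib sum_3 cong: if_cong)

lemma trace_conj: assumes "orthogonal_matrix (V::real^3^3)"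
  shows "trace (V ** X ** transpose V) = trace X"
proof -
  have "trace (V ** X ** transpose V) = trace (transpose V ** (V ** X))" by (rule trace_mul_sym)
  also have "\<dots> = trace ((transpose V ** V) ** X)" by (simp only: matrix_mul_assoc)
  also have "\<dots> = trace X" using assms by (simp add: orthogonal_matrix_def)
  finally show ?thesis .
qed

lemma trace_le_sv:
  assumes "is_sv A s" "orthogonal_matrix Q"
  shows "trace (Q ** A) \<le> s$1 + s$2 + s$3"
proof -
  obtain U V where UV: "orthogonal_matrix U" "orthogonal_matrix V" "A = U ** diag3 s ** transpose V"
    and s: "\<forall>i. s$i \<ge> 0" using assms(1) unfolding is_sv_def by blast
  define W where "W = transpose V ** Q ** U"
  have oW: "orthogonal_matrix W" unfolding W_def using UV assms(2)
    by (simp add: orthogonal_matrix_mul)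
  have "trace (Q ** A) = trace ((Q ** U ** diag3 s) ** transpose V)"
    using UV(3) by (simp add: matrix_mul_assoc)
  also have "\<dots> = trace (transpose V ** (Q ** U ** diag3 s))" by (rule trace_mul_sym)
  also have "\<dots> = trace (W ** diag3 s)" by (simp add: W_def matrix_mul_assoc)
  also have "\<dots> = W$1$1 * s$1 + W$2$2 * s$2 + W$3$3 * s$3" by (rule trace_diag)
  also have "\<dots> \<le> s$1 + s$2 + s$3"
  proof -
    have "W$i$i * s$i \<le> s$i" for i
      using mult_right_mono[of "W$i$i" 1 "s$i"] orth_entry[OF oW, of i i] s by auto
    then show ?thesis by (simp add: add_mono)
  qed
  finally show ?thesis .
qed

lemma trace_eq_sv:
  assumes "is_sv A s"
  shows "\<exists>Q. orthogonal_matrix Q \<and> trace (Q ** A) = s$1 + s$2 + s$3"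
proof -
  obtain U V where UV: "orthogonal_matrix U" "orthogonal_matrix V" "A = U ** diag3 s ** transpose V"
    using assms(1) unfolding is_sv_def by blast
  define Q where "Q = V ** transpose U"
  have oQ: "orthogonal_matrix Q" unfolding Q_def using UV by (simp add: orthogonal_matrix_mul)
  have "Q ** A = V ** (transpose U ** U) ** diag3 s ** transpose V"
    using UV(3) by (simp add: Q_def matrix_mul_assoc)
  also have "\<dots> = V ** diag3 s ** transpose V" using UV(1) by (simp add: orthogonal_matrix_def)
  finally have "trace (Q ** A) = trace (diag3 s)" using trace_conj[OF UV(2)] by simp
  also have "\<dots> = s$1 + s$2 + s$3" by (simp add: trace_def diag3_def sum_3)
  finally show ?thesis using oQ by blast
qed

lemma trace_bound: assumes "orthogonal_matrix (Q::real^3^3)"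
  shows "\<bar>trace (Q ** M)\<bar> \<le> 9 * norm M"
proof -
  have e: "\<bar>Q$i$k * M$k$i\<bar> \<le> norm M" for i k
  proof -
    have "\<bar>M$k$i\<bar> \<le> norm M"
      using order_trans[OF component_le_norm_cart Finite_Cartesian_Product.norm_nth_le] by blast
    then show ?thesis using orth_entry[OF assms, of i k]
      mult_mono[of "\<bar>Q$i$k\<bar>" 1 "\<bar>M$k$i\<bar>" "norm M"] by (simp add: abs_mult)
  qed
  have "\<bar>trace (Q ** M)\<bar> = \<bar>\<Sum>i\<in>UNIV. \<Sum>k\<in>UNIV. Q$i$k * M$k$i\<bar>"
    by (simp add: trace_def matrix_matrix_mult_def)
  also have "\<dots> \<le> (\<Sum>i\<in>UNIV. \<bar>\<Sum>k\<in>UNIV. Q$i$k * M$k$i\<bar>)" by (rule sum_abs)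
  also have "\<dots> \<le> (\<Sum>i\<in>(UNIV::3 set). \<Sum>k\<in>(UNIV::3 set). norm M)"
    by (intro sum_mono order_trans[OF sum_abs]) (use e in auto)
  also have "\<dots> = 9 * norm M" by simp
  finally show ?thesis .
qed

definition sig :: "real^3^3 \<Rightarrow> real" where
  "sig A = sv A $ 1 + sv A $ 2 + sv A $ 3"

lemma sig_lip: "sig A - sig B \<le> 9 * norm (A - B)"
proof -
  obtain Q where Q: "orthogonal_matrix Q" "trace (Q ** A) = sig A"
    using trace_eq_sv[OF sv_is[of A]] unfolding sig_def by blast
  have "trace (Q ** B) \<le> sig B" using trace_le_sv[OF sv_is Q(1)] unfolding sig_def by simp
  moreover have "trace (Q ** A) = trace (Q ** B) + trace (Q ** (A - B))"
  proof -
    have "Q ** A = Q ** (B + (A - B))" by simp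
    also have "\<dots> = Q ** B + Q ** (A - B)" by (rule matrix_add_ldistrib)
    finally show ?thesis by (simp add: trace_add)
  qed
  moreover have "trace (Q ** (A - B)) \<le> 9 * norm (A - B)" using trace_bound[OF Q(1), of "A - B"] by simp
  ultimately show ?thesis using Q(2) by simp
qed

lemma sig_cont: "continuous_on S sig"
proof -
  have "9-lipschitz_on UNIV sig"
  proof (rule lipschitz_onI)
    fix x y :: "real^3^3"
    show "dist (sig x) (sig y) \<le> 9 * dist x y"
      using sig_lip[of x y] sig_lip[of y x] by (simp add: dist_real_def dist_norm norm_minus_commute)
  qed simp
  then show ?thesis using lipschitz_on_continuous_on continuous_on_subset by blast
qed

lemma norm_sq_trace: "(norm (A::real^3^3))\<^sup>2 = trace (transpose A ** A)"
  by (simp add: power2_norm_eq_inner inner_vec_def trace_def matrix_matrix_mult_def transpose_def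
      sum_3 algebra_simps)

lemma sv_sq: assumes "is_sv A s" shows "s$1^2 + s$2^2 + s$3^2 = (norm A)\<^sup>2"
proof -
  obtain U V where UV: "orthogonal_matrix U" "orthogonal_matrix V" "A = U ** diag3 s ** transpose V"
    using assms(1) unfolding is_sv_def by blast
  have td: "transpose (diag3 s) = diag3 s" by (simp add: diag3_def transpose_def vec_eq_iff)
  have "transpose A ** A = V ** diag3 s ** (transpose U ** U) ** diag3 s ** transpose V"
    using UV(3) by (simp add: matrix_transpose_mul td matrix_mul_assoc)
  also have "\<dots> = V ** (diag3 s ** diag3 s) ** transpose V"
    using UV(1) by (simp add: orthogonal_matrix_def matrix_mul_assoc)
  finally have "trace (transpose A ** A) = trace (diag3 s ** diag3 s)" using trace_conj[OF UV(2)] by simp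
  also have "\<dots> = s$1^2 + s$2^2 + s$3^2"
    by (simp add: trace_diag) (simp add: diag3_def power2_eq_square)
  finally show ?thesis using norm_sq_trace by simp
qed

lemma P_formula: "Pfun lam A = ((sig A)\<^sup>2 - (norm A)\<^sup>2) / 2 - lam * sig A"
  using sv_sq[OF sv_is[of A]] unfolding Pfun_def sig_def Let_def
  by (simp add: power2_eq_square field_simps)

lemma tcof: "trace (cof (A::real^3^3)) = A$2$2*A$3$3 - A$2$3*A$3$2 + A$1$1*A$3$3 - A$1$3*A$3$1 + A$1$1*A$2$2 - A$1$2*A$2$1"
  by (simp add: trace_def sum_3 cof_def det_3)

lemma G_formula: "Gfun lam A = ((sig A)\<^sup>2 - (norm A)\<^sup>2) / 2 - lam * sig A
   - (A$2$2*A$3$3 - A$2$3*A$3$2 + A$1$1*A$3$3 - A$1$3*A$3$1 + A$1$1*A$2$2 - A$1$2*A$2$1)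
   + lam * (A$1$1 + A$2$2 + A$3$3)"
  unfolding Gfun_def P_formula Nfun_def tcof by (simp add: trace_def sum_3)

lemma G_cont: "continuous_on S (Gfun lam)"
  unfolding G_formula[abs_def]
  by (intro continuous_intros sig_cont) auto

lemma F2_cont: assumes "q > 0" shows "continuous_on S (F2 kappa q lam dh)"
proof -
  have "continuous_on S (\<lambda>A. (kappa/2) * (norm (A - mat lam)) powr q + (lam*dh) * Gfun lam A)"
    by (intro continuous_on_add continuous_on_mult_left continuous_on_powr' G_cont continuous_intros)
      (use assms in auto)
  moreover have "F2 kappa q lam dh = (\<lambda>A. (kappa/2) * (norm (A - mat lam)) powr q + (lam*dh) * Gfun lam A)"
    by (simp add: fun_eq_iff F2_def dist1_def)
  ultimately show ?thesis by simp
qed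
lemma aux_bound:
  fixes a k e w g :: real and M :: ereal
  assumes a: "a \<ge> 0" and k: "k > 0" and e: "e > 0"
   and le: "ereal a \<le> ereal k * (ereal e / M)"
   and wpos: "w > 0" and up: "ereal (g / w) \<le> M" and g: "g \<ge> 0"
  shows "a * g \<le> k * e * w"
proof (cases "a = 0")
  case True then show ?thesis using k e wpos by simp
next
  case False
  hence apos: "a > 0" using a by simp
  have M0: "M \<ge> 0" using up g wpos by (meson ereal_less_eq(5) order_trans divide_nonneg_pos less_imp_le)
  show ?thesis
  proof (cases M)
    case (real m)
    have gm: "g / w \<le> m" using up real by simp
    show ?thesis
    proof (cases "m = 0")
      case True
      hence "g = 0" using gm g wpos by (smt (verit) divide_pos_pos)
      then show ?thesis using k e wpos by simp
    next
      case False
      hence mpos: "m > 0" using M0 real by simp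
      have "ereal e / M = ereal (e / m)" using real False by (simp add: ereal_divide)
      hence "a \<le> k * (e / m)" using le by simp
      moreover have "g \<le> m * w" using gm wpos by (simp add: divide_le_eq)
      ultimately have "a * g \<le> (k * (e / m)) * (m * w)"
        using a g by (intro mult_mono) auto
      also have "\<dots> = k * e * w" using mpos by (simp add: field_simps)
      finally show ?thesis .
    qed
  next
    case PInf
    then have "ereal a \<le> 0" using le by simp
    then show ?thesis using apos by simp
  next
    case MInf
    then show ?thesis using M0 by simp
  qed
qed

theorem lemma3p2:
  fixes lam q kappa :: real and h :: "real \<Rightarrow> ereal"
  assumes lam_pos: "lam > 0"
    and q: "2 < q" "q < 3"
    and kappa: "2 powr (2 - q) \<le> kappa" "kappa \<le> q * 2 powr (1 - q)"
    and h_nonneg: "\<forall>t. h t \<ge> 0"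
    and h_convex: "convex_ext h"
    and h_finite: "\<forall>t>0. h t < \<infinity>"
    and h_C1: "(\<lambda>t. real_of_ereal (h t)) C1_differentiable_on {0<..}"
    and h_lim0: "(h \<longlongrightarrow> \<infinity>) (at_right 0)"
    and h_liminf: "Liminf at_top (\<lambda>t. h t / ereal t) > 0"
    and h_neg: "\<forall>t\<le>0. h t = \<infinity>"
    and h_deriv: "deriv (\<lambda>t. real_of_ereal (h t)) (lam ^ 3) \<ge> 0"
    and bound: "ereal (lam * deriv (\<lambda>t. real_of_ereal (h t)) (lam ^ 3))
       \<le> (INF c0 \<in> {0<..}. ereal (kappa / 2) *
             max (ereal (c0 powr (q - 2)) / M2 lam c0) (ereal (c0 powr (q - 3)) / M3 lam c0))"
  shows "\<forall>A :: real^3^3. F2 kappa q lam (deriv (\<lambda>t. real_of_ereal (h t)) (lam ^ 3)) A \<ge> 0"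
proof -
  define d where "d = deriv (\<lambda>t. real_of_ereal (h t)) (lam ^ 3)"
  define a where "a = lam * d"
  have a0: "a \<ge> 0" using lam_pos h_deriv by (simp add: a_def d_def)
  have "0 < (2::real) powr (2 - q)" by simp
  hence kpos: "kappa / 2 > 0" using kappa(1) by linarith
  define F where "F = F2 kappa q lam d"
  have Fdef: "F A = kappa / 2 * (dist1 lam A) powr q + a * Gfun lam A" for A
    unfolding F_def F2_def a_def by simp
  have Fc: "continuous_on UNIV F" unfolding F_def using F2_cont q by simp
  have bnd: "ereal a \<le> ereal (kappa/2) * max (ereal (c0 powr (q-2)) / M2 lam c0) (ereal (c0 powr (q-3)) / M3 lam c0)"
    if "c0 > 0" for c0
    using bound INF_lower[of c0 "{0<..}"] that unfolding a_def d_def by (blast intro: order_trans)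
  have key: "(\<forall>B. dist1 lam B \<ge> c0 \<longrightarrow> F B \<ge> 0) \<or> (\<forall>B. 0 < dist1 lam B \<and> dist1 lam B < c0 \<longrightarrow> F B \<ge> 0)"
    if c0: "c0 > 0" for c0
  proof -
    have "ereal a \<le> ereal (kappa/2) * (ereal (c0 powr (q-2)) / M2 lam c0) \<or>
          ereal a \<le> ereal (kappa/2) * (ereal (c0 powr (q-3)) / M3 lam c0)"
      using bnd[OF c0] by (auto simp: max_def split: if_splits)
    then show ?thesis
    proof
      assume h2: "ereal a \<le> ereal (kappa/2) * (ereal (c0 powr (q-2)) / M2 lam c0)"
      have "F B \<ge> 0" if "dist1 lam B \<ge> c0" for B
      proof -
        define r where "r = dist1 lam B"
        have r: "r \<ge> c0" "r > 0" using that c0 by (auto simp: r_def)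
        have up: "ereal (\<bar>Gfun lam B\<bar> / r^2) \<le> M2 lam c0"
          unfolding M2_def r_def using that by (intro SUP_upper) auto
        have "a * \<bar>Gfun lam B\<bar> \<le> kappa/2 * c0 powr (q-2) * r^2"
          by (rule aux_bound[OF a0 kpos _ h2 _ up]) (use r c0 in auto)
        also have "\<dots> \<le> kappa/2 * r powr (q-2) * r^2"
          using kpos r c0 q by (intro mult_right_mono mult_left_mono powr_mono2) auto
        also have "\<dots> = kappa/2 * r powr q"
        proof -
          have "r powr (q-2) * r^2 = r powr (q-2) * r powr 2" using r by (simp add: powr_numeral)
          also have "\<dots> = r powr q" by (simp add: powr_add[symmetric])
          finally show ?thesis by (simp add: mult.assoc)
        qed
        finally have "a * \<bar>Gfun lam B\<bar> \<le> kappa/2 * r powr q" .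
        moreover have "- (a * \<bar>Gfun lam B\<bar>) \<le> a * Gfun lam B" using a0
          by (metis abs_ge_minus_self abs_mult abs_of_nonneg minus_le_iff)
        ultimately show ?thesis unfolding Fdef r_def[symmetric] by linarith
      qed
      then show ?thesis by blast
    next
      assume h3: "ereal a \<le> ereal (kappa/2) * (ereal (c0 powr (q-3)) / M3 lam c0)"
      have "F B \<ge> 0" if "0 < dist1 lam B \<and> dist1 lam B < c0" for B
      proof -
        define r where "r = dist1 lam B"
        have r: "r < c0" "r > 0" using that c0 by (auto simp: r_def)
        have up: "ereal (\<bar>Gfun lam B\<bar> / r^3) \<le> M3 lam c0"
          unfolding M3_def r_def using that by (intro SUP_upper) auto
        have "a * \<bar>Gfun lam B\<bar> \<le> kappa/2 * c0 powr (q-3) * r^3"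
          by (rule aux_bound[OF a0 kpos _ h3 _ up]) (use r c0 in auto)
        also have "\<dots> \<le> kappa/2 * r powr (q-3) * r^3"
          using kpos r c0 q by (intro mult_right_mono mult_left_mono powr_mono2') auto
        also have "\<dots> = kappa/2 * r powr q"
        proof -
          have "r powr (q-3) * r^3 = r powr (q-3) * r powr 3" using r by (simp add: powr_numeral)
          also have "\<dots> = r powr q" by (simp add: powr_add[symmetric])
          finally show ?thesis by (simp add: mult.assoc)
        qed
        finally have "a * \<bar>Gfun lam B\<bar> \<le> kappa/2 * r powr q" .
        moreover have "- (a * \<bar>Gfun lam B\<bar>) \<le> a * Gfun lam B" using a0
          by (metis abs_ge_minus_self abs_mult abs_of_nonneg minus_le_iff)
        ultimately show ?thesis unfolding Fdef r_def[symmetric] by linarith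
      qed
      then show ?thesis by blast
    qed
  qed
  have pathc: "continuous_on UNIV (\<lambda>t::real. F (mat lam + t *\<^sub>R H))" for H :: "real^3^3"
    by (intro continuous_on_compose2[OF Fc] continuous_intros) auto
  have pathlim: "((\<lambda>t::real. F (mat lam + t *\<^sub>R H)) \<longlongrightarrow> F (mat lam + t0 *\<^sub>R H)) (at t0 within S)"
    for H :: "real^3^3" and t0 S
  proof -
    have "((\<lambda>t::real. F (mat lam + t *\<^sub>R H)) \<longlongrightarrow> F (mat lam + t0 *\<^sub>R H)) (at t0)"
      using pathc[of H] by (simp add: continuous_on_def)
    then show ?thesis by (rule tendsto_mono[OF at_within_le_at])
  qed
  have dpath: "dist1 lam (mat lam + t *\<^sub>R H) = \<bar>t\<bar> * norm H" for t H
    by (simp add: dist1_def)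
  have pos: "F B \<ge> 0" if "dist1 lam B > 0" for B
  proof -
    define r where "r = dist1 lam B"
    define H where "H = B - mat lam"
    have nH: "norm H = r" by (simp add: H_def r_def dist1_def)
    have rp: "r > 0" using that r_def by simp
    from key[OF rp] show ?thesis
    proof
      assume "\<forall>C. r \<le> dist1 lam C \<longrightarrow> 0 \<le> F C"
      then show ?thesis using r_def by simp
    next
      assume sh: "\<forall>C. 0 < dist1 lam C \<and> dist1 lam C < r \<longrightarrow> 0 \<le> F C"
      have pt: "0 \<le> F (mat lam + t *\<^sub>R H)" if "t \<in> {0<..<1}" for t :: real
      proof -
        have "0 < t" "t < 1" using that by auto
        hence "0 < dist1 lam (mat lam + t *\<^sub>R H) \<and> dist1 lam (mat lam + t *\<^sub>R H) < r"
          using dpath[of t H] nH rp by (simp add: mult_less_cancel_right2)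
        then show ?thesis using sh by blast
      qed
      have ev: "eventually (\<lambda>t. 0 \<le> F (mat lam + t *\<^sub>R H)) (at_left 1)"
        using eventually_mono[OF eventually_at_left_real[of 0 "1::real"] pt] by simp
      have "0 \<le> F (mat lam + 1 *\<^sub>R H)"
        by (rule tendsto_lowerbound[OF pathlim ev]) simp
      then show ?thesis by (simp add: H_def)
    qed
  qed
  have allF: "F A \<ge> 0" for A
  proof (cases "dist1 lam A > 0")
    case True then show ?thesis using pos by blast
  next
    case False
    hence "A = mat lam" by (simp add: dist1_def)
    define H where "H = (mat 1 :: real^3^3)"
    have nH: "norm H > 0" unfolding H_def
    proof -
      have "(mat 1 :: real^3^3) \<noteq> 0" by (simp add: vec_eq_iff mat_def)
      then show "norm (mat 1 :: real^3^3) > 0" by simp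
    qed
    have pt: "0 \<le> F (mat lam + t *\<^sub>R H)" if "t \<in> {0<..<1}" for t :: real
      using that pos dpath[of t H] nH by simp
    have ev: "eventually (\<lambda>t. 0 \<le> F (mat lam + t *\<^sub>R H)) (at_right 0)"
      using eventually_mono[OF eventually_at_right_real[of 0 "1::real"] pt] by simp
    have "0 \<le> F (mat lam + 0 *\<^sub>R H)"
      by (rule tendsto_lowerbound[OF pathlim ev]) simp
    then show ?thesis using \<open>A = mat lam\<close> by simp
  qed
  show ?thesis using allF unfolding F_def d_def by blast
qed

end
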